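(* Let $\Delta$ be a pure $(d-1)$-dimensional simplicial complex on $[n]$, and let $\Gamma$ be the simplicial complex (collection of subsets of $[n]$ closed under taking subsets) with $I(\Delta)=I_\Gamma$. Then $\bar\Delta=\mathrm{skel}_\Gamma(d-1)$.
   Context: $S=K[x_1,\ldots,x_n]$, $x_F=\prod_{i\in F}x_i$. $I(\Delta)$ is the facet ideal, generated by $x_F$ for the facets (maximal faces) $F$ of $\Delta$; $I_\Gamma$ is the Stanley–Reisner ideal, generated by $x_F$ for $F\subseteq[n]$, $F\notin\Gamma$. $\Delta$ is pure if all facets have the same cardinality. $\bar\Delta$ is the simplicial complex whose facets are the $d$-element subsets $F\subseteq[n]$ with $F\notin\Delta$. $\mathrm{skel}_\Gamma(i)$ is the complex whose facets are the $i$-dimensional faces of $\Gamma$ (a face $F$ has dimension $|F|-1$). *)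

theory Defs
  imports "HOL-Library.Poly_Mapping"
begin

type_synonym 'k mpoly = "(nat \<Rightarrow>\<^sub>0 nat) \<Rightarrow>\<^sub>0 'k"

definition polyring :: "nat \<Rightarrow> ('k::field) mpoly set" where
  "polyring n = {p. \<forall>m \<in> Poly_Mapping.keys p. Poly_Mapping.keys m \<subseteq> {1..n}}"

definition var :: "nat \<Rightarrow> ('k::field) mpoly" where
  "var i = Poly_Mapping.single (Poly_Mapping.single i 1) 1"

definition xmon :: "nat set \<Rightarrow> ('k::field) mpoly" where
  "xmon F = (\<Prod>i\<in>F. var i)"

definition ideal_gen :: "('k::field) mpoly set \<Rightarrow> 'k mpoly set \<Rightarrow> 'k mpoly set" where
  "ideal_gen R G = {p. \<exists>T r. finite T \<and> T \<subseteq> G \<and> (\<forall>g\<in>T. r g \<in> R) \<and> p = (\<Sum>g\<in>T. r g * g)}"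

definition simplicial_complex :: "nat \<Rightarrow> nat set set \<Rightarrow> bool" where
  "simplicial_complex n \<Delta> \<longleftrightarrow> (\<forall>F\<in>\<Delta>. F \<subseteq> {1..n}) \<and> (\<forall>F\<in>\<Delta>. \<forall>G. G \<subseteq> F \<longrightarrow> G \<in> \<Delta>)"

definition facets :: "nat set set \<Rightarrow> nat set set" where
  "facets \<Delta> = {F\<in>\<Delta>. \<forall>G\<in>\<Delta>. F \<subseteq> G \<longrightarrow> G = F}"

text \<open>Pure of dimension d-1: nonempty and every facet has exactly d elements.\<close>
definition pure_dim :: "nat set set \<Rightarrow> nat \<Rightarrow> bool" where
  "pure_dim \<Delta> d \<longleftrightarrow> \<Delta> \<noteq> {} \<and> (\<forall>F\<in>facets \<Delta>. card F = d)"

definition facet_ideal :: "nat \<Rightarrow> nat set set \<Rightarrow> ('k::field) mpoly set" where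
  "facet_ideal n \<Delta> = ideal_gen (polyring n) (xmon ` facets \<Delta>)"

definition SR_ideal :: "nat \<Rightarrow> nat set set \<Rightarrow> ('k::field) mpoly set" where
  "SR_ideal n \<Gamma> = ideal_gen (polyring n) (xmon ` {F. F \<subseteq> {1..n} \<and> F \<notin> \<Gamma>})"

definition complex_gen :: "nat set set \<Rightarrow> nat set set" where
  "complex_gen X = {G. \<exists>F\<in>X. G \<subseteq> F}"

definition complement_complex :: "nat \<Rightarrow> nat \<Rightarrow> nat set set \<Rightarrow> nat set set" where
  "complement_complex n d \<Delta> = complex_gen {F. F \<subseteq> {1..n} \<and> card F = d \<and> F \<notin> \<Delta>}"

definition skel :: "nat set set \<Rightarrow> int \<Rightarrow> nat set set" where
  "skel \<Gamma> i = complex_gen {F\<in>\<Gamma>. int (card F) - 1 = i}"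

end

theory Submission
  imports Defs
begin

definition ind :: "nat set \<Rightarrow> (nat \<Rightarrow>\<^sub>0 nat)" where
  "ind G = (\<Sum>i\<in>G. Poly_Mapping.single i 1)"

lemma lookup_ind: assumes "finite G" shows "Poly_Mapping.lookup (ind G) j = (if j \<in> G then 1 else 0)"
proof -
  have "Poly_Mapping.lookup (ind G) j = (\<Sum>i\<in>G. Poly_Mapping.lookup (Poly_Mapping.single i (1::nat)) j)"
    unfolding ind_def by (rule lookup_sum)
  also have "\<dots> = (\<Sum>i\<in>G. if i = j then 1 else 0)"
    by (intro sum.cong) (auto simp: lookup_single when_def)
  finally show ?thesis using assms by (simp add: sum.delta)
qed

lemma keys_ind: "finite G \<Longrightarrow> Poly_Mapping.keys (ind G) = G"
  by (auto simp: in_keys_iff lookup_ind split: if_splits)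

lemma xmon_single: "finite G \<Longrightarrow> (xmon G :: 'k::field mpoly) = Poly_Mapping.single (ind G) 1"
proof (induction G rule: finite_induct)
  case empty
  then show ?case by (simp add: xmon_def ind_def one_poly_mapping.abs_eq single.abs_eq)
next
  case (insert x F)
  then show ?case by (simp add: xmon_def ind_def var_def mult_single)
qed

lemma mem_ideal_imp:
  assumes "finite G" "\<forall>F\<in>S. finite F" "(xmon G :: 'k::field mpoly) \<in> ideal_gen R (xmon ` S)"
  shows "\<exists>F\<in>S. F \<subseteq> G"
proof -
  obtain T r where T: "finite T" "T \<subseteq> xmon ` S" "(xmon G :: 'k mpoly) = (\<Sum>g\<in>T. r g * g)"
    using assms(3) unfolding ideal_gen_def by blast
  have "Poly_Mapping.lookup (xmon G :: 'k mpoly) (ind G) = 1" using assms(1) by (simp add: xmon_single)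
  hence "(\<Sum>g\<in>T. Poly_Mapping.lookup (r g * g) (ind G)) \<noteq> 0" using T(3) by (simp add: lookup_sum)
  then obtain g where g: "g \<in> T" "Poly_Mapping.lookup (r g * g) (ind G) \<noteq> 0" by (meson sum.neutral)
  obtain F where F: "F \<in> S" "g = xmon F" using g T(2) by blast
  have fF: "finite F" using F assms(2) by blast
  have "ind G \<in> Poly_Mapping.keys (r g * g)" using g by (simp add: in_keys_iff)
  then obtain a b where ab: "ind G = a + b" "b \<in> Poly_Mapping.keys g"
    using keys_mult by blast
  have "b = ind F" using ab(2) F(2) fF by (simp add: xmon_single)
  have "F \<subseteq> G"
  proof
    fix i assume "i \<in> F"
    have "Poly_Mapping.lookup (ind G) i = Poly_Mapping.lookup a i + Poly_Mapping.lookup (ind F) i" using ab \<open>b = ind F\<close> by (simp add: lookup_add)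
    also have "\<dots> \<ge> 1" using \<open>i \<in> F\<close> fF by (simp add: lookup_ind)
    finally show "i \<in> G" using assms(1) by (simp add: lookup_ind split: if_splits)
  qed
  thus ?thesis using F by blast
qed

lemma mem_ideal_if:
  assumes "G \<subseteq> {1..n}" "F \<in> S" "F \<subseteq> G"
  shows "(xmon G :: 'k::field mpoly) \<in> ideal_gen (polyring n) (xmon ` S)"
proof -
  have fG: "finite G" using assms(1) finite_subset by blast
  have eq: "(xmon G :: 'k mpoly) = xmon (G - F) * xmon F"
    unfolding xmon_def using prod.subset_diff[OF assms(3) fG] by simp
  have "(xmon (G - F) :: 'k mpoly) \<in> polyring n"
    using fG assms(1) by (auto simp: polyring_def xmon_single keys_ind)
  thus ?thesis unfolding ideal_gen_def
    by (intro CollectI exI[of _ "{xmon F}"] exI[of _ "\<lambda>_. xmon (G - F)"]) (use eq assms(2) in auto)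
qed

theorem lemma1p1:
  fixes n d :: nat and \<Delta> \<Gamma> :: "nat set set"
  assumes "simplicial_complex n \<Delta>"
    and "pure_dim \<Delta> d"
    and "simplicial_complex n \<Gamma>"
    and "(facet_ideal n \<Delta> :: 'k::field mpoly set) = SR_ideal n \<Gamma>"
  shows "complement_complex n d \<Delta> = skel \<Gamma> (int d - 1)"
proof -
  have Dsub: "\<forall>F\<in>\<Delta>. F \<subseteq> {1..n}" using assms(1) by (simp add: simplicial_complex_def)
  have Gsub: "\<forall>F\<in>\<Gamma>. F \<subseteq> {1..n}" using assms(3) by (simp add: simplicial_complex_def)
  have Gcl: "\<forall>F\<in>\<Gamma>. \<forall>G. G \<subseteq> F \<longrightarrow> G \<in> \<Gamma>" using assms(3) by (simp add: simplicial_complex_def)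
  have finD: "finite \<Delta>"
  proof -
    have "\<Delta> \<subseteq> Pow {1..n}" using Dsub by blast
    thus ?thesis by (rule finite_subset) simp
  qed
  have facfin: "\<forall>F\<in>facets \<Delta>. finite F"
    using Dsub by (auto simp: facets_def intro: finite_subset)
  have key: "G \<notin> \<Gamma> \<longleftrightarrow> (\<exists>F\<in>facets \<Delta>. F \<subseteq> G)" if G: "G \<subseteq> {1..n}" for G
  proof -
    have fG: "finite G" using G finite_subset by blast
    have "(xmon G :: 'k mpoly) \<in> facet_ideal n \<Delta> \<longleftrightarrow> (\<exists>F\<in>facets \<Delta>. F \<subseteq> G)"
    proof
      assume "(xmon G :: 'k mpoly) \<in> facet_ideal n \<Delta>"
      thus "\<exists>F\<in>facets \<Delta>. F \<subseteq> G" unfolding facet_ideal_def by (rule mem_ideal_imp[OF fG facfin])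
    next
      assume "\<exists>F\<in>facets \<Delta>. F \<subseteq> G"
      then obtain F where "F \<in> facets \<Delta>" "F \<subseteq> G" by blast
      thus "(xmon G :: 'k mpoly) \<in> facet_ideal n \<Delta>" unfolding facet_ideal_def by (rule mem_ideal_if[OF G])
    qed
    moreover have "(xmon G :: 'k mpoly) \<in> SR_ideal n \<Gamma> \<longleftrightarrow> G \<notin> \<Gamma>"
    proof
      assume "(xmon G :: 'k mpoly) \<in> SR_ideal n \<Gamma>"
      moreover have "\<forall>F\<in>{F. F \<subseteq> {1..n} \<and> F \<notin> \<Gamma>}. finite F"
        by (auto intro: finite_subset)
      ultimately have "\<exists>F\<in>{F. F \<subseteq> {1..n} \<and> F \<notin> \<Gamma>}. F \<subseteq> G"
        unfolding SR_ideal_def by (intro mem_ideal_imp[OF fG])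
      then obtain F where "F \<in> {F. F \<subseteq> {1..n} \<and> F \<notin> \<Gamma>}" "F \<subseteq> G" by blast
      thus "G \<notin> \<Gamma>" using Gcl by blast
    next
      assume "G \<notin> \<Gamma>"
      show "(xmon G :: 'k mpoly) \<in> SR_ideal n \<Gamma>"
        unfolding SR_ideal_def by (rule mem_ideal_if[OF G, of G]) (use G \<open>G \<notin> \<Gamma>\<close> in auto)
    qed
    ultimately show ?thesis using assms(4) by blast
  qed
  have key2: "F \<in> \<Delta> \<longleftrightarrow> (\<exists>E\<in>facets \<Delta>. E \<subseteq> F)" if F: "F \<subseteq> {1..n}" "card F = d" for F
  proof
    assume "F \<in> \<Delta>"
    then obtain E where E: "E \<in> \<Delta>" "F \<subseteq> E" "\<forall>b\<in>\<Delta>. E \<subseteq> b \<longrightarrow> E = b"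
      using finite_has_maximal2[OF finD] by (metis order.refl)
    hence Ef: "E \<in> facets \<Delta>" by (auto simp: facets_def)
    hence "card E = d" using assms(2) by (simp add: pure_dim_def)
    moreover have "finite E" using Ef facfin by blast
    ultimately have "E = F" using E(2) F(2) by (metis card_subset_eq)
    thus "\<exists>E\<in>facets \<Delta>. E \<subseteq> F" using Ef by blast
  next
    assume "\<exists>E\<in>facets \<Delta>. E \<subseteq> F"
    then obtain E where Ef: "E \<in> facets \<Delta>" "E \<subseteq> F" by blast
    have "card E = d" using Ef assms(2) by (simp add: pure_dim_def)
    moreover have "finite F" using F finite_subset by blast
    ultimately have "E = F" using Ef(2) F(2) by (metis card_subset_eq)
    thus "F \<in> \<Delta>" using Ef by (simp add: facets_def)
  qed
  have "{F. F \<subseteq> {1..n} \<and> card F = d \<and> F \<notin> \<Delta>} = {F\<in>\<Gamma>. int (card F) - 1 = int d - 1}"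
  proof (intro set_eqI iffI)
    fix F assume "F \<in> {F. F \<subseteq> {1..n} \<and> card F = d \<and> F \<notin> \<Delta>}"
    thus "F \<in> {F\<in>\<Gamma>. int (card F) - 1 = int d - 1}" using key key2 by auto
  next
    fix F assume A: "F \<in> {F\<in>\<Gamma>. int (card F) - 1 = int d - 1}"
    hence "F \<subseteq> {1..n}" "card F = d" using Gsub by auto
    thus "F \<in> {F. F \<subseteq> {1..n} \<and> card F = d \<and> F \<notin> \<Delta>}" using key key2 A by auto
  qed
  thus ?thesis by (simp add: complement_complex_def skel_def)
qed

end
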